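(* Let $(\mathfrak g,\mu,P)$ be a Nijenhuis Lie algebra and $(M,P_M)$ a Nijenhuis representation over it, and let $\iota:\mathrm C^\bullet_{\mathrm{NjL}}(\mathfrak g,M)\hookrightarrow\mathrm C^\bullet_{\mathrm{NjL}}(\mathfrak g\ltimes M)$ be the embedding described below. Then the image $\mathrm{Im}(\iota)$ is a subcomplex of $(\mathrm C^\bullet_{\mathrm{NjL}}(\mathfrak g\ltimes M),\delta_{\mathrm{NjL}})$.
   Context: All vector spaces are over a field $\mathbf k$ of characteristic $0$. A Nijenhuis Lie algebra is a Lie algebra $(\mathfrak g,\mu=[-,-]_\mu)$ with linear $P$ satisfying $[Pa,Pb]_\mu=P([Pa,b]_\mu+[a,Pb]_\mu-P[a,b]_\mu)$; a Nijenhuis representation is a representation $M$ of $(\mathfrak g,\mu)$ with linear $P_M$ such that $P(a)P_M(x)=P_M(P(a)x+aP_M(x)-P_M(ax))$. The semidirect product $\mathfrak g\ltimes M$ is $\mathfrak g\oplus M$ with bracket $[(a,x),(b,y)]=([a,b]_\mu,ay-bx)$; with the operator $P\oplus P_M$ it is a Nijenhuis Lie algebra (and hence a Nijenhuis representation over itself via the adjoint action). For a Nijenhuis Lie algebra $\mathfrak h$ with Nijenhuis representation $N$ define: $\mathrm C^n_{\mathrm{Lie}}(\mathfrak h,N)=\mathrm{Hom}(\wedge^n\mathfrak h,N)$ with Chevalley–Eilenberg differential $\delta_{\mathrm{Lie},N}(f)(a_1,\dots,a_{n+1})=\sum_i(-1)^{i-1}a_if(\dots,\widehat{a_i},\dots)+\sum_{i<j}(-1)^{i+j}f([a_i,a_j],\dots,\widehat{a_i},\dots,\widehat{a_j},\dots)$;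 $\mathrm C^n_{\mathrm{NjO}}(\mathfrak h,N)=\mathrm{Hom}(\wedge^n\mathfrak h,N)$ with $\delta_{\mathrm{NjO},N}(f)=-P_N\circ\delta_{\mathrm{Lie},N}(f)+\partial(f)$, where $\partial(f)(a_1,\dots,a_{n+1})=\sum_i(-1)^{i-1}P(a_i)f(\dots,\widehat{a_i},\dots)+\sum_{i<j}(-1)^{i+j}f([a_i,a_j]_P,\dots,\widehat{a_i},\dots,\widehat{a_j},\dots)$ and $[a,b]_P=[Pa,b]+[a,Pb]-P[a,b]$; $\Psi_N:\mathrm C^\bullet_{\mathrm{Lie}}\to\mathrm C^\bullet_{\mathrm{NjO}}$ is $\mathrm{Id}_N$ in degree $0$ and $\Psi_N(f)(a_1,\dots,a_n)=\sum_{k=0}^n\sum_{i_1<\dots<i_k}(-1)^{n-k}P_N^{n-k}f(a_1,\dots,Pa_{i_1},\dots,Pa_{i_k},\dots,a_n)$. The complex $\mathrm C^\bullet_{\mathrm{NjL}}(\mathfrak h,N)$ has $\mathrm C^0_{\mathrm{NjL}}=\mathrm C^0_{\mathrm{Lie}}(\mathfrak h,N)$, $\mathrm C^n_{\mathrm{NjL}}=\mathrm C^n_{\mathrm{Lie}}(\mathfrak h,N)\oplus\mathrm C^{n-1}_{\mathrm{NjO}}(\mathfrak h,N)$ for $n\ge1$, and $\delta_{\mathrm{NjL},N}(f,g)=(\delta_{\mathrm{Lie},N}(f),-\Psi_N(f)-\delta_{\mathrm{NjO},N}(g))$. $\mathrm C^\bullet_{\mathrm{NjL}}(\mathfrak g\ltimes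 M)$ with differential $\delta_{\mathrm{NjL}}$ denotes this complex for $\mathfrak h=N=\mathfrak g\ltimes M$ (adjoint). The embedding $\iota$ sends a map $f:\wedge^n\mathfrak g\to M$ to $\bar f:\wedge^n(\mathfrak g\oplus M)\to\mathfrak g\oplus M$, $\bar f((a_1,x_1),\dots,(a_n,x_n))=(0,f(a_1,\dots,a_n))$ (for $n=0$, $m\in M\mapsto(0,m)$), and $\iota(f,g)=(\bar f,\bar g)$. *)

theory Defs
  imports Complex_Main "HOL-Library.Product_Plus"
begin

definition bilinear_map ::
  "('k::field \<Rightarrow> 'a::ab_group_add \<Rightarrow> 'a) \<Rightarrow> ('k \<Rightarrow> 'b::ab_group_add \<Rightarrow> 'b) \<Rightarrow>
   ('k \<Rightarrow> 'c::ab_group_add \<Rightarrow> 'c) \<Rightarrow> ('a \<Rightarrow> 'b \<Rightarrow> 'c) \<Rightarrow> bool" where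
  "bilinear_map sa sb sc m \<longleftrightarrow>
     (\<forall>b. Vector_Spaces.linear sa sc (\<lambda>a. m a b)) \<and> (\<forall>a. Vector_Spaces.linear sb sc (m a))"

definition lie_algebra :: "('k::field \<Rightarrow> 'g::ab_group_add \<Rightarrow> 'g) \<Rightarrow> ('g \<Rightarrow> 'g \<Rightarrow> 'g) \<Rightarrow> bool" where
  "lie_algebra s br \<longleftrightarrow> vector_space s \<and> bilinear_map s s s br \<and>
     (\<forall>a. br a a = 0) \<and>
     (\<forall>a b c. br a (br b c) + br b (br c a) + br c (br a b) = 0)"

definition lie_rep ::
  "('k::field \<Rightarrow> 'g::ab_group_add \<Rightarrow> 'g) \<Rightarrow> ('g \<Rightarrow> 'g \<Rightarrow> 'g) \<Rightarrow>
   ('k \<Rightarrow> 'm::ab_group_add \<Rightarrow> 'm) \<Rightarrow> ('g \<Rightarrow> 'm \<Rightarrow> 'm) \<Rightarrow> bool" where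
  "lie_rep s br sM act \<longleftrightarrow> lie_algebra s br \<and> vector_space sM \<and> bilinear_map s sM sM act \<and>
     (\<forall>a b x. act (br a b) x = act a (act b x) - act b (act a x))"

definition nijenhuis_lie_algebra ::
  "('k::field \<Rightarrow> 'g::ab_group_add \<Rightarrow> 'g) \<Rightarrow> ('g \<Rightarrow> 'g \<Rightarrow> 'g) \<Rightarrow> ('g \<Rightarrow> 'g) \<Rightarrow> bool" where
  "nijenhuis_lie_algebra s br P \<longleftrightarrow> lie_algebra s br \<and> Vector_Spaces.linear s s P \<and>
     (\<forall>a b. br (P a) (P b) = P (br (P a) b + br a (P b) - P (br a b)))"

definition nijenhuis_rep ::
  "('k::field \<Rightarrow> 'g::ab_group_add \<Rightarrow> 'g) \<Rightarrow> ('g \<Rightarrow> 'g \<Rightarrow> 'g) \<Rightarrow> ('g \<Rightarrow> 'g) \<Rightarrow>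
   ('k \<Rightarrow> 'm::ab_group_add \<Rightarrow> 'm) \<Rightarrow> ('g \<Rightarrow> 'm \<Rightarrow> 'm) \<Rightarrow> ('m \<Rightarrow> 'm) \<Rightarrow> bool" where
  "nijenhuis_rep s br P sM act PM \<longleftrightarrow> nijenhuis_lie_algebra s br P \<and> lie_rep s br sM act \<and>
     Vector_Spaces.linear sM sM PM \<and>
     (\<forall>a x. act (P a) (PM x) = PM (act (P a) x + act a (PM x) - PM (act a x)))"

definition sd_br :: "('g \<Rightarrow> 'g \<Rightarrow> 'g) \<Rightarrow> ('g \<Rightarrow> 'm::ab_group_add \<Rightarrow> 'm) \<Rightarrow>
    'g \<times> 'm \<Rightarrow> 'g \<times> 'm \<Rightarrow> 'g \<times> 'm" where
  "sd_br br act p q = (br (fst p) (fst q), act (fst p) (snd q) - act (fst q) (snd p))"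

definition sd_P :: "('g \<Rightarrow> 'g) \<Rightarrow> ('m \<Rightarrow> 'm) \<Rightarrow> 'g \<times> 'm \<Rightarrow> 'g \<times> 'm" where
  "sd_P P PM p = (P (fst p), PM (snd p))"

text \<open>An n-cochain in Hom(wedge^n h, N) is represented as a function on lists,
  multilinear and alternating on lists of length n and zero on lists of other lengths.\<close>

definition cochains ::
  "('k::field \<Rightarrow> 'h::ab_group_add \<Rightarrow> 'h) \<Rightarrow> ('k \<Rightarrow> 'n::ab_group_add \<Rightarrow> 'n) \<Rightarrow> nat \<Rightarrow> ('h list \<Rightarrow> 'n) set" where
  "cochains s sN n = {f.
     (\<forall>xs. length xs \<noteq> n \<longrightarrow> f xs = 0) \<and>
     (\<forall>xs i. length xs = n \<longrightarrow> i < n \<longrightarrow> Vector_Spaces.linear s sN (\<lambda>y. f (xs[i := y]))) \<and>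
     (\<forall>xs i j. length xs = n \<longrightarrow> i < j \<longrightarrow> j < n \<longrightarrow> xs ! i = xs ! j \<longrightarrow> f xs = 0)}"

definition alt_sign :: "nat \<Rightarrow> 'a::ab_group_add \<Rightarrow> 'a" where
  "alt_sign i x = (if even i then x else - x)"

definition del_nth :: "nat \<Rightarrow> 'a list \<Rightarrow> 'a list" where
  "del_nth i xs = take i xs @ drop (Suc i) xs"

text \<open>Chevalley--Eilenberg differential C^n \<rightarrow> C^(n+1) (0-based indices).\<close>
definition delta_Lie :: "('h \<Rightarrow> 'h \<Rightarrow> 'h) \<Rightarrow> ('h \<Rightarrow> 'n::ab_group_add \<Rightarrow> 'n) \<Rightarrow> nat \<Rightarrow>
    ('h list \<Rightarrow> 'n) \<Rightarrow> 'h list \<Rightarrow> 'n" where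
  "delta_Lie br act n f xs =
     (if length xs = Suc n then
        (\<Sum>i<Suc n. alt_sign i (act (xs ! i) (f (del_nth i xs)))) +
        (\<Sum>j<Suc n. \<Sum>i<j. alt_sign (i + j) (f (br (xs ! i) (xs ! j) # del_nth i (del_nth j xs))))
      else 0)"

definition br_P :: "('h::ab_group_add \<Rightarrow> 'h \<Rightarrow> 'h) \<Rightarrow> ('h \<Rightarrow> 'h) \<Rightarrow> 'h \<Rightarrow> 'h \<Rightarrow> 'h" where
  "br_P br P a b = br (P a) b + br a (P b) - P (br a b)"

definition delta_NjO :: "('h::ab_group_add \<Rightarrow> 'h \<Rightarrow> 'h) \<Rightarrow> ('h \<Rightarrow> 'n::ab_group_add \<Rightarrow> 'n) \<Rightarrow>
    ('h \<Rightarrow> 'h) \<Rightarrow> ('n \<Rightarrow> 'n) \<Rightarrow> nat \<Rightarrow> ('h list \<Rightarrow> 'n) \<Rightarrow> 'h list \<Rightarrow> 'n" where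
  "delta_NjO br act P PN n f xs =
     (if length xs = Suc n then
        - PN (delta_Lie br act n f xs) + delta_Lie (br_P br P) (\<lambda>a. act (P a)) n f xs
      else 0)"

definition apply_at :: "('h \<Rightarrow> 'h) \<Rightarrow> nat set \<Rightarrow> 'h list \<Rightarrow> 'h list" where
  "apply_at P S xs = map (\<lambda>(i, x). if i \<in> S then P x else x) (zip [0..<length xs] xs)"

definition Psi :: "('h \<Rightarrow> 'h) \<Rightarrow> ('n::ab_group_add \<Rightarrow> 'n) \<Rightarrow> nat \<Rightarrow> ('h list \<Rightarrow> 'n) \<Rightarrow> 'h list \<Rightarrow> 'n" where
  "Psi P PN n f xs =
     (if length xs = n then
        (\<Sum>S\<in>Pow {..<n}. alt_sign (n - card S) ((PN ^^ (n - card S)) (f (apply_at P S xs))))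
      else 0)"

text \<open>C^n_NjL = C^n_Lie (+) C^(n-1)_NjO for n \<ge> 1 and C^0_NjL = C^0_Lie
  (the second component is then required to be 0).\<close>
definition NjL_cochains ::
  "('k::field \<Rightarrow> 'h::ab_group_add \<Rightarrow> 'h) \<Rightarrow> ('k \<Rightarrow> 'n::ab_group_add \<Rightarrow> 'n) \<Rightarrow> nat \<Rightarrow>
   (('h list \<Rightarrow> 'n) \<times> ('h list \<Rightarrow> 'n)) set" where
  "NjL_cochains s sN n = {(f, g). f \<in> cochains s sN n \<and>
     (if n = 0 then g = (\<lambda>_. 0) else g \<in> cochains s sN (n - 1))}"

definition delta_NjL :: "('h::ab_group_add \<Rightarrow> 'h \<Rightarrow> 'h) \<Rightarrow> ('h \<Rightarrow> 'n::ab_group_add \<Rightarrow> 'n) \<Rightarrow>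
    ('h \<Rightarrow> 'h) \<Rightarrow> ('n \<Rightarrow> 'n) \<Rightarrow> nat \<Rightarrow> ('h list \<Rightarrow> 'n) \<times> ('h list \<Rightarrow> 'n) \<Rightarrow>
    ('h list \<Rightarrow> 'n) \<times> ('h list \<Rightarrow> 'n)" where
  "delta_NjL br act P PN n fg =
     (delta_Lie br act n (fst fg),
      \<lambda>xs. - Psi P PN n (fst fg) xs
            - (if n = 0 then 0 else delta_NjO br act P PN (n - 1) (snd fg) xs))"

definition iota_map :: "('g list \<Rightarrow> 'm) \<Rightarrow> ('g \<times> 'm) list \<Rightarrow> 'g::zero \<times> 'm" where
  "iota_map f xs = (0, f (map fst xs))"

definition iota :: "('g list \<Rightarrow> 'm) \<times> ('g list \<Rightarrow> 'm) \<Rightarrow>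
    (('g \<times> 'm) list \<Rightarrow> 'g::zero \<times> 'm) \<times> (('g \<times> 'm) list \<Rightarrow> 'g \<times> 'm)" where
  "iota fg = (iota_map (fst fg), iota_map (snd fg))"

end

theory Submission
  imports Defs
begin

lemma length_del_nth[simp]: "i < length xs \<Longrightarrow> length (del_nth i xs) = length xs - 1"
  by (simp add: del_nth_def)

lemma nth_del_nth: "i < length xs \<Longrightarrow> k < length xs - 1 \<Longrightarrow>
  del_nth i xs ! k = (if k < i then xs ! k else xs ! Suc k)"
  by (auto simp: del_nth_def nth_append min_def)

lemma map_del_nth: "map f (del_nth i xs) = del_nth i (map f xs)"
  by (simp add: del_nth_def take_map drop_map)

lemma del_nth_update_same: "del_nth i (xs[i := y]) = del_nth i xs"
  by (simp add: del_nth_def)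

lemma del_nth_update: "i < length xs \<Longrightarrow> k < length xs \<Longrightarrow> k \<noteq> i \<Longrightarrow>
  del_nth i (xs[k := y]) = (del_nth i xs)[(if k < i then k else k - 1) := y]"
  by (cases "k < i") (auto intro!: nth_equalityI simp: nth_del_nth nth_list_update)

lemma del_nth_upd_lt: "i < j \<Longrightarrow> j < length xs \<Longrightarrow> del_nth j (xs[i := y]) = (del_nth j xs)[i := y]"
  by (auto intro!: nth_equalityI simp: nth_del_nth nth_list_update)

lemma del_nth_adj: "Suc p < length ys \<Longrightarrow> ys ! p = ys ! Suc p \<Longrightarrow> del_nth p ys = del_nth (Suc p) ys"
  by (auto intro!: nth_equalityI simp: nth_del_nth less_Suc_eq)

lemma adj_del: "Suc q < length ys \<Longrightarrow> ys ! q = ys ! Suc q \<Longrightarrow> i < length ys \<Longrightarrow> i \<noteq> q \<Longrightarrow> i \<noteq> Suc q \<Longrightarrow>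
  Suc (if i < q then q - 1 else q) < length (del_nth i ys) \<and>
  del_nth i ys ! (if i < q then q - 1 else q) = del_nth i ys ! Suc (if i < q then q - 1 else q)"
  by (auto simp: nth_del_nth)

lemma length_apply_at[simp]: "length (apply_at P S xs) = length xs"
  by (simp add: apply_at_def)

lemma nth_apply_at: "i < length xs \<Longrightarrow> apply_at P S xs ! i = (if i \<in> S then P (xs ! i) else xs ! i)"
  by (simp add: apply_at_def)

lemma apply_at_update: "k < length xs \<Longrightarrow>
  apply_at P S (xs[k := y]) = (apply_at P S xs)[k := (if k \<in> S then P y else y)]"
  by (auto intro!: nth_equalityI simp: nth_apply_at nth_list_update)

lemma map_apply_at: "map fst (apply_at (sd_P P PM) S xs) = apply_at P S (map fst xs)"
  by (auto intro!: nth_equalityI simp: nth_apply_at sd_P_def)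


lemma vs_module: "vector_space s \<Longrightarrow> module s"
  by (simp add: module_iff_vector_space)
lemma vs_scale_zero: "vector_space s \<Longrightarrow> s c 0 = 0"
  by (rule module.scale_zero_right[OF vs_module])
lemma vs_scale_add: "vector_space s \<Longrightarrow> s c (x + y) = s c x + s c y"
  by (rule module.scale_right_distrib[OF vs_module])
lemma vs_scale_neg: "vector_space s \<Longrightarrow> s c (- x) = - s c x"
  by (rule module.scale_minus_right[OF vs_module])

lemma lin_add: "Vector_Spaces.linear s1 s2 f \<Longrightarrow> f (x + y) = f x + f y"
  by (simp add: Vector_Spaces.linear_iff)
lemma lin_scale: "Vector_Spaces.linear s1 s2 f \<Longrightarrow> f (s1 c x) = s2 c (f x)"
  by (simp add: Vector_Spaces.linear_iff)
lemma lin_zero: "Vector_Spaces.linear s1 s2 f \<Longrightarrow> f 0 = 0"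
proof -
  assume l: "Vector_Spaces.linear s1 s2 f"
  have "f 0 = f (0 + 0)" by simp
  also have "\<dots> = f 0 + f 0" by (rule lin_add[OF l])
  finally show ?thesis by (simp only: add_cancel_right_right)
qed
lemma lin_neg: "Vector_Spaces.linear s1 s2 f \<Longrightarrow> f (- x) = - f x"
proof -
  assume l: "Vector_Spaces.linear s1 s2 f"
  have "f (- x) + f x = f (- x + x)" by (rule lin_add[OF l, symmetric])
  also have "\<dots> = 0" by (simp add: lin_zero[OF l])
  finally show ?thesis by (simp add: eq_neg_iff_add_eq_0)
qed
lemma lin_diff: "Vector_Spaces.linear s1 s2 f \<Longrightarrow> f (x - y) = f x - f y"
  using lin_add[of s1 s2 f x "- y"] lin_neg[of s1 s2 f y] by (simp only: diff_conv_add_uminus)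
lemma lin_vs1: "Vector_Spaces.linear s1 s2 f \<Longrightarrow> vector_space s1"
  by (simp add: Vector_Spaces.linear_iff)
lemma lin_vs2: "Vector_Spaces.linear s1 s2 f \<Longrightarrow> vector_space s2"
  by (simp add: Vector_Spaces.linear_iff)

lemma lin_comp: "Vector_Spaces.linear s1 s2 f \<Longrightarrow> Vector_Spaces.linear s2 s3 g \<Longrightarrow>
   Vector_Spaces.linear s1 s3 (\<lambda>x. g (f x))"
  using Vector_Spaces.linear_compose[of s1 s2 f s3 g] by (simp add: o_def)

lemma lin_const0: "vector_space s1 \<Longrightarrow> vector_space s2 \<Longrightarrow> Vector_Spaces.linear s1 s2 (\<lambda>x. 0)"
  by (simp add: Vector_Spaces.linear_iff vs_scale_zero)

lemma lin_id: "vector_space s1 \<Longrightarrow> Vector_Spaces.linear s1 s1 (\<lambda>x. x)"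
  by (simp add: Vector_Spaces.linear_iff)

lemma lin_addf: "Vector_Spaces.linear s1 s2 f \<Longrightarrow> Vector_Spaces.linear s1 s2 g \<Longrightarrow>
   Vector_Spaces.linear s1 s2 (\<lambda>x. f x + g x)"
  by (simp add: Vector_Spaces.linear_iff vs_scale_add algebra_simps)

lemma lin_negf: "Vector_Spaces.linear s1 s2 f \<Longrightarrow> Vector_Spaces.linear s1 s2 (\<lambda>x. - f x)"
  by (simp add: Vector_Spaces.linear_iff vs_scale_neg algebra_simps)

lemma lin_difff: "Vector_Spaces.linear s1 s2 f \<Longrightarrow> Vector_Spaces.linear s1 s2 g \<Longrightarrow>
   Vector_Spaces.linear s1 s2 (\<lambda>x. f x - g x)"
proof -
  assume lf: "Vector_Spaces.linear s1 s2 f" and lg: "Vector_Spaces.linear s1 s2 g"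
  have "(\<lambda>x. f x - g x) = (\<lambda>x. f x + - g x)" by simp
  then show ?thesis using lin_addf[OF lf lin_negf[OF lg]] by simp
qed

lemma lin_alt: "Vector_Spaces.linear s1 s2 f \<Longrightarrow> Vector_Spaces.linear s1 s2 (\<lambda>x. alt_sign i (f x))"
  by (cases "even i") (simp_all add: alt_sign_def lin_negf)

lemma alt_sign_lin: "vector_space s \<Longrightarrow> Vector_Spaces.linear s s (alt_sign i)"
  using lin_alt[OF lin_id, of s i] by simp

lemma lin_sumf: "vector_space s1 \<Longrightarrow> vector_space s2 \<Longrightarrow> (\<And>a. a \<in> A \<Longrightarrow> Vector_Spaces.linear s1 s2 (F a)) \<Longrightarrow>
   Vector_Spaces.linear s1 s2 (\<lambda>x. \<Sum>a\<in>A. F a x)"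
proof (induction A rule: infinite_finite_induct)
  case (infinite A) then show ?case by (simp add: lin_const0)
next
  case empty then show ?case by (simp add: lin_const0)
next
  case (insert x F) then show ?case by (simp add: lin_addf)
qed

lemma lin_pow: "Vector_Spaces.linear s s f \<Longrightarrow> Vector_Spaces.linear s s (f ^^ m)"
proof (induction m)
  case 0 then show ?case using lin_id[OF lin_vs1[OF 0]] by (simp add: id_def)
next
  case (Suc m) then show ?case using lin_comp[OF Suc.IH Suc.prems] by (simp add: o_def)
qed

lemma alt_sign_neg: "alt_sign i (- x) = - alt_sign i x"
  by (simp add: alt_sign_def)
lemma alt_sign_Suc: "alt_sign (Suc i) x = - alt_sign i x"
  by (simp add: alt_sign_def)
lemma alt_sign_zero[simp]: "alt_sign i 0 = 0"
  by (simp add: alt_sign_def)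

lemma bil_left: "bilinear_map sa sb sc m \<Longrightarrow> Vector_Spaces.linear sa sc (\<lambda>a. m a b)"
  by (simp add: bilinear_map_def)
lemma bil_right: "bilinear_map sa sb sc m \<Longrightarrow> Vector_Spaces.linear sb sc (m a)"
  by (simp add: bilinear_map_def)

lemma vs_half: "vector_space (s :: 'k::field_char_0 \<Rightarrow> 'a::ab_group_add \<Rightarrow> 'a) \<Longrightarrow> (x::'a) = - x \<Longrightarrow> x = 0"
proof -
  assume vs: "vector_space s" and h: "x = - x"
  have "x + x = - x + x" by (rule arg_cong[OF h, of "\<lambda>y. y + x"])
  hence "x + x = 0" by (simp only: add.left_inverse)
  have "s 2 x = x + x"
    using module.scale_left_distrib[OF vs_module[OF vs], of 1 1 x] module.scale_one[OF vs_module[OF vs]]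
    by (simp add: one_add_one)
  hence "s (1/2) (s 2 x) = 0" using \<open>x + x = 0\<close> vs_scale_zero[OF vs] by simp
  thus "x = 0" using module.scale_scale[OF vs_module[OF vs]] module.scale_one[OF vs_module[OF vs]] by simp
qed

definition addslot :: "nat \<Rightarrow> ('h::ab_group_add list \<Rightarrow> 'n::ab_group_add) \<Rightarrow> bool" where
  "addslot N g \<longleftrightarrow> (\<forall>xs i y z. length xs = N \<longrightarrow> i < N \<longrightarrow> g (xs[i := y + z]) = g (xs[i := y]) + g (xs[i := z]))"

definition adjzero :: "nat \<Rightarrow> ('h list \<Rightarrow> 'n::ab_group_add) \<Rightarrow> bool" where
  "adjzero N g \<longleftrightarrow> (\<forall>xs p. length xs = N \<longrightarrow> Suc p < N \<longrightarrow> xs ! p = xs ! Suc p \<longrightarrow> g xs = 0)"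

lemma adj_swap:
  assumes ad: "addslot N g" and az: "adjzero N g" and len: "length xs = N" and p: "Suc p < N"
  shows "g (xs[p := xs ! Suc p, Suc p := xs ! p]) = - g xs"
proof -
  define h where "h u v = g (xs[p := u, Suc p := v])" for u v
  have h1: "h (u + u') v = h u v + h u' v" for u u' v
  proof -
    have e: "xs[p := w, Suc p := v] = (xs[Suc p := v])[p := w]" for w
      by (simp add: list_update_swap)
    show ?thesis unfolding h_def e using ad len p unfolding addslot_def
      by (metis Suc_lessD length_list_update)
  qed
  have h2: "h u (v + v') = h u v + h u v'" for u v v'
    unfolding h_def using ad len p unfolding addslot_def by simp
  have h0: "h u u = 0" for u
    unfolding h_def using az len p unfolding adjzero_def by (simp add: nth_list_update)
  let ?a = "xs ! p" and ?b = "xs ! Suc p"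
  have "0 = h (?a + ?b) (?a + ?b)" by (simp add: h0)
  also have "\<dots> = h ?a ?b + h ?b ?a" by (simp add: h1 h2 h0[of "?a"] h0[of "?b"])
  finally have "h ?a ?b + h ?b ?a = 0" by simp
  hence "h ?b ?a = - h ?a ?b" by (metis neg_eq_iff_add_eq_0)
  moreover have "h ?a ?b = g xs" by (simp add: h_def)
  ultimately show ?thesis by (simp add: h_def)
qed

lemma adj_swap_list:
  assumes "addslot N g" "adjzero N g" "length (us @ a # b # ws) = N"
  shows "g (us @ b # a # ws) = - g (us @ a # b # ws)"
proof -
  have "(us @ a # b # ws)[length us := (us @ a # b # ws) ! Suc (length us),
          Suc (length us) := (us @ a # b # ws) ! length us] = us @ b # a # ws"
    by (simp add: list_update_append nth_append)
  with adj_swap[OF assms, of "length us"] assms(3) show ?thesis by simp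
qed

lemma adj_move:
  assumes "addslot N g" "adjzero N g"
  shows "length (us @ a # vs @ ws) = N \<Longrightarrow> g (us @ a # vs @ ws) = alt_sign (length vs) (g (us @ vs @ a # ws))"
proof (induction vs arbitrary: us)
  case Nil then show ?case by (simp add: alt_sign_def)
next
  case (Cons v vs)
  have "g (us @ a # v # vs @ ws) = - g (us @ v # a # vs @ ws)"
    using adj_swap_list[OF assms, of us v a "vs @ ws"] Cons.prems by simp
  also have "g (us @ v # a # vs @ ws) = g ((us @ [v]) @ a # vs @ ws)" by simp
  also have "\<dots> = alt_sign (length vs) (g ((us @ [v]) @ vs @ a # ws))"
    using Cons.IH[of "us @ [v]"] Cons.prems by simp
  finally show ?case by (simp add: alt_sign_Suc)
qed

lemma adj_full:
  assumes ad: "addslot N g" and az: "adjzero N g" and len: "length xs = N"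
    and ij: "i < j" "j < N" and eq: "xs ! i = xs ! j"
  shows "g xs = 0"
proof -
  define us where "us = take i xs"
  define vs where "vs = take (j - Suc i) (drop (Suc i) xs)"
  define ws where "ws = drop (Suc j) xs"
  define a where "a = xs ! j"
  have d1: "xs = take i xs @ xs ! i # drop (Suc i) xs"
    using ij len by (simp add: id_take_nth_drop)
  have d2: "drop (Suc i) xs = vs @ drop j xs"
    unfolding vs_def using ij
    by (metis Suc_leI append_take_drop_id drop_drop le_add_diff_inverse2)
  have d3: "drop j xs = a # ws" unfolding a_def ws_def using ij len by (simp add: Cons_nth_drop_Suc)
  have xs: "xs = us @ a # vs @ a # ws" using d1 d2 d3 eq unfolding us_def a_def by simp
  have "g xs = alt_sign (length vs) (g (us @ vs @ a # a # ws))"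
    using adj_move[OF ad az, of us a vs "a # ws"] xs len by simp
  moreover have "g (us @ vs @ a # a # ws) = 0"
    using az len xs unfolding adjzero_def
    by (auto dest!: spec[of _ "us @ vs @ a # a # ws"] spec[of _ "length us + length vs"] simp: nth_append)
  ultimately show ?thesis by simp
qed

lemma cochainD_len: "f \<in> cochains s sN n \<Longrightarrow> length xs \<noteq> n \<Longrightarrow> f xs = 0"
  by (simp add: cochains_def)
lemma cochainD_lin: "f \<in> cochains s sN n \<Longrightarrow> length xs = n \<Longrightarrow> i < n \<Longrightarrow>
   Vector_Spaces.linear s sN (\<lambda>y. f (xs[i := y]))"
  by (simp add: cochains_def)
lemma cochainD_alt: "f \<in> cochains s sN n \<Longrightarrow> length xs = n \<Longrightarrow> i < j \<Longrightarrow> j < n \<Longrightarrow> xs ! i = xs ! j \<Longrightarrow> f xs = 0"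
  by (simp add: cochains_def)
lemma cochainD_adj: "f \<in> cochains s sN n \<Longrightarrow> length xs = n \<Longrightarrow> Suc q < n \<Longrightarrow> xs ! q = xs ! Suc q \<Longrightarrow> f xs = 0"
  using cochainD_alt[of f s sN n xs q "Suc q"] by simp

lemma cochain_addslot: "f \<in> cochains s sN n \<Longrightarrow> addslot n f"
  unfolding addslot_def using cochainD_lin lin_add by fastforce
lemma cochain_adjzero: "f \<in> cochains s sN n \<Longrightarrow> adjzero n f"
  unfolding adjzero_def using cochainD_adj by fastforce

lemma cochain_swap: "f \<in> cochains s sN n \<Longrightarrow> length xs = n \<Longrightarrow> Suc p < n \<Longrightarrow>
  f (xs[p := xs ! Suc p, Suc p := xs ! p]) = - f xs"
  by (rule adj_swap[OF cochain_addslot cochain_adjzero])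

lemma cochainI:
  assumes "\<And>xs. length xs \<noteq> n \<Longrightarrow> f xs = 0"
    and lin: "\<And>xs i. length xs = n \<Longrightarrow> i < n \<Longrightarrow> Vector_Spaces.linear s sN (\<lambda>y. f (xs[i := y]))"
    and "adjzero n f"
  shows "f \<in> cochains s sN n"
proof -
  have "addslot n f" unfolding addslot_def using lin lin_add by fastforce
  then show ?thesis unfolding cochains_def using assms adj_full[of n f] by auto
qed

lemma cochain_add: "f \<in> cochains s sN n \<Longrightarrow> g \<in> cochains s sN n \<Longrightarrow> (\<lambda>xs. f xs + g xs) \<in> cochains s sN n"
  unfolding cochains_def by (auto intro: lin_addf)
lemma cochain_neg: "f \<in> cochains s sN n \<Longrightarrow> (\<lambda>xs. - f xs) \<in> cochains s sN n"
  unfolding cochains_def by (auto intro: lin_negf)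
lemma cochain_diff: "f \<in> cochains s sN n \<Longrightarrow> g \<in> cochains s sN n \<Longrightarrow> (\<lambda>xs. f xs - g xs) \<in> cochains s sN n"
  unfolding cochains_def by (auto intro: lin_difff)
lemma cochain_comp: "f \<in> cochains s sN n \<Longrightarrow> Vector_Spaces.linear sN sN' PM \<Longrightarrow> (\<lambda>xs. PM (f xs)) \<in> cochains s sN' n"
  unfolding cochains_def apply (auto simp: lin_zero)
  subgoal for xs i using lin_comp[of s sN "\<lambda>y. f (xs[i:=y])" sN' PM] by auto
  done

lemma cochain_hd_lin: "f \<in> cochains s sN n \<Longrightarrow> Suc (length L) = n \<Longrightarrow> Vector_Spaces.linear s sN (\<lambda>z. f (z # L))"
  using cochainD_lin[of f s sN n "0 # L" 0] by simp

lemma cochain_tl_lin: "f \<in> cochains s sN n \<Longrightarrow> Suc (length L) = n \<Longrightarrow> k < length L \<Longrightarrow>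
   Vector_Spaces.linear s sN (\<lambda>z. f (c # L[k := z]))"
  using cochainD_lin[of f s sN n "c # L" "Suc k"] by simp

lemma delta_Lie_cochain:
  fixes s :: "'k::field \<Rightarrow> 'h::ab_group_add \<Rightarrow> 'h" and sN :: "'k \<Rightarrow> 'n::ab_group_add \<Rightarrow> 'n"
    and br :: "'h \<Rightarrow> 'h \<Rightarrow> 'h" and act :: "'h \<Rightarrow> 'n \<Rightarrow> 'n" and f :: "'h list \<Rightarrow> 'n"
  assumes vs: "vector_space s" and vsN: "vector_space sN"
    and bb: "bilinear_map s s s br" and ba: "bilinear_map s sN sN act"
    and aa: "\<And>a. br a a = 0"
    and f: "f \<in> cochains s sN n"
  shows "delta_Lie br act n f \<in> cochains s sN (Suc n)"
proof (rule cochainI)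
  show "\<And>xs. length xs \<noteq> Suc n \<Longrightarrow> delta_Lie br act n f xs = 0"
    by (simp add: delta_Lie_def)
next
  fix xs :: "'h list" and k
  assume len: "length xs = Suc n" and k: "k < Suc n"
  define T1 where "T1 i y = alt_sign i (act (xs[k := y] ! i) (f (del_nth i (xs[k := y]))))" for i y
  define T2 where "T2 i j y = alt_sign (i + j) (f (br (xs[k := y] ! i) (xs[k := y] ! j) #
      del_nth i (del_nth j (xs[k := y]))))" for i j y
  have e: "(\<lambda>y. delta_Lie br act n f (xs[k := y])) =
     (\<lambda>y. (\<Sum>i<Suc n. T1 i y) + (\<Sum>j<Suc n. \<Sum>i<j. T2 i j y))"
    by (rule ext) (simp add: delta_Lie_def len T1_def T2_def)
  have l1: "Vector_Spaces.linear s sN (T1 i)" if i: "i < Suc n" for i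
  proof (cases "i = k")
    case True
    have "T1 i = (\<lambda>y. alt_sign i (act y (f (del_nth k xs))))"
      using True len k by (auto simp: T1_def del_nth_update_same)
    then show ?thesis using lin_alt[OF bil_left[OF ba]] by simp
  next
    case False
    define k' where "k' = (if k < i then k else k - 1)"
    have "T1 i = (\<lambda>y. alt_sign i (act (xs ! i) (f ((del_nth i xs)[k' := y]))))"
      using False len k i by (auto simp: T1_def del_nth_update k'_def)
    moreover have "Vector_Spaces.linear s sN (\<lambda>y. f ((del_nth i xs)[k' := y]))"
      using cochainD_lin[OF f, of "del_nth i xs" k'] len k i False by (auto simp: k'_def)
    ultimately show ?thesis using lin_alt[OF lin_comp[OF _ bil_right[OF ba]]] by simp
  qed
  have l2: "Vector_Spaces.linear s sN (T2 i j)" if ij: "i < j" "j < Suc n" for i j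
  proof -
    have n: "Suc (length (del_nth i (del_nth j xs))) = n" using ij len by simp
    consider "k = i" | "k = j" | "k \<noteq> i" "k \<noteq> j" by blast
    then show ?thesis
    proof cases
      case 1
      have "T2 i j = (\<lambda>y. alt_sign (i + j) (f (br y (xs ! j) # del_nth i (del_nth j xs))))"
        using 1 ij len by (auto simp: T2_def del_nth_upd_lt del_nth_update_same)
      then show ?thesis using lin_alt[OF lin_comp[OF bil_left[OF bb] cochain_hd_lin[OF f n]]] by simp
    next
      case 2
      have "T2 i j = (\<lambda>y. alt_sign (i + j) (f (br (xs ! i) y # del_nth i (del_nth j xs))))"
        using 2 ij len by (auto simp: T2_def del_nth_update_same)
      then show ?thesis using lin_alt[OF lin_comp[OF bil_right[OF bb] cochain_hd_lin[OF f n]]] by simp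
    next
      case 3
      define k1 where "k1 = (if k < j then k else k - 1)"
      define k2 where "k2 = (if k1 < i then k1 else k1 - 1)"
      have k1i: "k1 \<noteq> i" "k1 < n" using 3 ij k unfolding k1_def by auto
      have k2: "k2 < length (del_nth i (del_nth j xs))" using k1i ij len unfolding k2_def by auto
      have "T2 i j = (\<lambda>y. alt_sign (i + j) (f (br (xs ! i) (xs ! j) # (del_nth i (del_nth j xs))[k2 := y])))"
        using 3 ij len k k1i by (auto simp: T2_def del_nth_update k1_def[symmetric] k2_def[symmetric])
      then show ?thesis using lin_alt[OF cochain_tl_lin[OF f n k2]] by simp
    qed
  qed
  show "Vector_Spaces.linear s sN (\<lambda>y. delta_Lie br act n f (xs[k := y]))"
    unfolding e
    by (intro lin_addf lin_sumf vs vsN l1 l2) auto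
next
  show "adjzero (Suc n) (delta_Lie br act n f)"
    unfolding adjzero_def
  proof (intro allI impI)
    fix xs :: "'h list" and p
    assume len: "length xs = Suc n" and p: "Suc p < Suc n" and eq: "xs ! p = xs ! Suc p"
    define T1 where "T1 i = alt_sign i (act (xs ! i) (f (del_nth i xs)))" for i
    define T2 where "T2 i j = alt_sign (i + j) (f (br (xs ! i) (xs ! j) # del_nth i (del_nth j xs)))" for i j
    have d: "delta_Lie br act n f xs = (\<Sum>i<Suc n. T1 i) + (\<Sum>j<Suc n. \<Sum>i<j. T2 i j)"
      by (simp add: delta_Lie_def len T1_def T2_def)
    have T1z: "T1 i = 0" if "i < Suc n" "i \<noteq> p" "i \<noteq> Suc p" for i
    proof -
      have "f (del_nth i xs) = 0"
        using adj_del[of p xs i] that len p eq cochainD_adj[OF f, of "del_nth i xs"] by auto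
      then show ?thesis by (simp add: T1_def lin_zero[OF bil_right[OF ba]])
    qed
    have A: "(\<Sum>i<Suc n. T1 i) = 0"
    proof -
      have "(\<Sum>i<Suc n. T1 i) = (\<Sum>i\<in>{p, Suc p}. T1 i)"
        by (rule sum.mono_neutral_right) (use p T1z in auto)
      also have "\<dots> = T1 p + T1 (Suc p)" by simp
      also have "T1 (Suc p) = - T1 p"
        using del_nth_adj[of p xs] len p eq by (simp add: T1_def alt_sign_Suc)
      finally show ?thesis by simp
    qed
    have T2z: "T2 i j = 0" if "i < j" "j < Suc n" "i \<noteq> p" "i \<noteq> Suc p" "j \<noteq> p" "j \<noteq> Suc p" for i j
    proof -
      define q1 where "q1 = (if j < p then p - 1 else p)"
      define L1 where "L1 = del_nth j xs"
      have a1: "Suc q1 < length L1" "L1 ! q1 = L1 ! Suc q1"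
        using adj_del[of p xs j] that len p eq unfolding q1_def L1_def by auto
      have iq: "i \<noteq> q1" "i \<noteq> Suc q1" "i < length L1" using that len unfolding q1_def L1_def by auto
      define q2 where "q2 = (if i < q1 then q1 - 1 else q1)"
      have a2: "Suc q2 < length (del_nth i L1)" "del_nth i L1 ! q2 = del_nth i L1 ! Suc q2"
        using adj_del[OF a1 iq(3) iq(1) iq(2)] unfolding q2_def by auto
      have "f (br (xs ! i) (xs ! j) # del_nth i L1) = 0"
        using cochainD_adj[OF f, of "br (xs ! i) (xs ! j) # del_nth i L1" "Suc q2"] a2 iq len that
        by (simp add: L1_def)
      then show ?thesis by (simp add: T2_def L1_def)
    qed
    have inner0: "(\<Sum>i<j. T2 i j) = 0" if "j < Suc n" "j \<noteq> p" "j \<noteq> Suc p" for j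
    proof (cases "j < p")
      case True
      then show ?thesis using that by (auto intro!: sum.neutral T2z)
    next
      case False
      hence jp: "Suc p < j" using that by auto
      have "(\<Sum>i<j. T2 i j) = (\<Sum>i\<in>{p, Suc p}. T2 i j)"
        by (rule sum.mono_neutral_right) (use that jp T2z in auto)
      also have "\<dots> = T2 p j + T2 (Suc p) j" by simp
      also have "T2 (Suc p) j = - T2 p j"
      proof -
        have "del_nth p (del_nth j xs) = del_nth (Suc p) (del_nth j xs)"
          by (rule del_nth_adj) (use jp that len eq in \<open>auto simp: nth_del_nth\<close>)
        then show ?thesis by (simp add: T2_def eq alt_sign_Suc)
      qed
      finally show ?thesis by simp
    qed
    have B: "(\<Sum>j<Suc n. \<Sum>i<j. T2 i j) = 0"
    proof -
      have "(\<Sum>j<Suc n. \<Sum>i<j. T2 i j) = (\<Sum>j\<in>{p, Suc p}. \<Sum>i<j. T2 i j)"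
        by (rule sum.mono_neutral_right) (use p inner0 in auto)
      also have "\<dots> = (\<Sum>i<p. T2 i p) + (\<Sum>i<Suc p. T2 i (Suc p))" by simp
      also have "(\<Sum>i<Suc p. T2 i (Suc p)) = (\<Sum>i<p. T2 i (Suc p)) + T2 p (Suc p)" by simp
      also have "T2 p (Suc p) = 0"
        using aa[of "xs ! p"] lin_zero[OF cochain_hd_lin[OF f, of "del_nth p (del_nth (Suc p) xs)"]] len p
        by (simp add: T2_def eq)
      also have "(\<Sum>i<p. T2 i (Suc p)) = (\<Sum>i<p. - T2 i p)"
        using del_nth_adj[of p xs] len p eq by (intro sum.cong) (simp_all add: T2_def alt_sign_Suc)
      finally show ?thesis by (simp add: sum_negf)
    qed
    show "delta_Lie br act n f xs = 0" using d A B by simp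
  qed
qed

lemma Psi_cochain:
  fixes s :: "'k::field_char_0 \<Rightarrow> 'h::ab_group_add \<Rightarrow> 'h" and sN :: "'k \<Rightarrow> 'n::ab_group_add \<Rightarrow> 'n"
    and P :: "'h \<Rightarrow> 'h" and PM :: "'n \<Rightarrow> 'n" and f :: "'h list \<Rightarrow> 'n"
  assumes vs: "vector_space s" and vsN: "vector_space sN"
    and linP: "Vector_Spaces.linear s s P" and linPM: "Vector_Spaces.linear sN sN PM"
    and f: "f \<in> cochains s sN n"
  shows "Psi P PM n f \<in> cochains s sN n"
proof (rule cochainI)
  show "\<And>xs. length xs \<noteq> n \<Longrightarrow> Psi P PM n f xs = 0" by (simp add: Psi_def)
next
  fix xs :: "'h list" and k
  assume len: "length xs = n" and k: "k < n"
  have e: "(\<lambda>y. Psi P PM n f (xs[k := y])) = (\<lambda>y. \<Sum>S\<in>Pow {..<n}. alt_sign (n - card S)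
      ((PM ^^ (n - card S)) (f ((apply_at P S xs)[k := (if k \<in> S then P y else y)]))))"
    by (rule ext) (simp add: Psi_def len k apply_at_update)
  have inner: "Vector_Spaces.linear s sN (\<lambda>y. f ((apply_at P S xs)[k := (if k \<in> S then P y else y)]))" for S
  proof (cases "k \<in> S")
    case True
    then show ?thesis using lin_comp[OF linP cochainD_lin[OF f, of "apply_at P S xs" k]] len k by simp
  next
    case False
    then show ?thesis using cochainD_lin[OF f, of "apply_at P S xs" k] len k by simp
  qed
  show "Vector_Spaces.linear s sN (\<lambda>y. Psi P PM n f (xs[k := y]))"
    unfolding e
    by (intro lin_sumf vs vsN lin_alt lin_comp[OF inner lin_pow[OF linPM]])
next
  show "adjzero n (Psi P PM n f)"
    unfolding adjzero_def
  proof (intro allI impI)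
    fix xs :: "'h list" and p
    assume len: "length xs = n" and p: "Suc p < n" and eq: "xs ! p = xs ! Suc p"
    define sw where "sw x = (if x = p then Suc p else if x = Suc p then p else x)" for x
    have sw2: "sw (sw x) = x" for x by (simp add: sw_def)
    have memsw: "x \<in> sw ` S \<longleftrightarrow> sw x \<in> S" for x S
      by (metis image_iff sw2)
    have injsw: "inj sw" by (metis injI sw2)
    define t where "t S = alt_sign (n - card S) ((PM ^^ (n - card S)) (f (apply_at P S xs)))" for S
    have ps: "Psi P PM n f xs = (\<Sum>S\<in>Pow {..<n}. t S)" by (simp add: Psi_def len t_def)
    have swlt: "sw x < n" if "x < n" for x using that p by (simp add: sw_def)
    have bij: "bij_betw ((`) sw) (Pow {..<n}) (Pow {..<n})"
      by (rule bij_betw_byWitness[where f'="(`) sw"]) (auto simp: image_image sw2 swlt)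
    have tsw: "t (sw ` S) = - t S" for S
    proof -
      define L where "L = apply_at P S xs"
      have cs: "card (sw ` S) = card S" using injsw by (simp add: card_image inj_on_subset)
      have lin0: "(PM ^^ m) 0 = 0" for m using lin_zero[OF lin_pow[OF linPM]] .
      show ?thesis
      proof (cases "p \<in> S \<longleftrightarrow> Suc p \<in> S")
        case True
        have "sw ` S = S" using True by (auto simp: memsw sw_def)
        moreover have "f L = 0"
          using cochainD_adj[OF f, of L p] len p True eq by (auto simp: L_def nth_apply_at)
        ultimately show ?thesis by (simp add: t_def L_def lin0)
      next
        case False
        have "apply_at P (sw ` S) xs = L[p := L ! Suc p, Suc p := L ! p]"
          using False len p eq
          by (auto intro!: nth_equalityI simp: L_def nth_apply_at nth_list_update memsw sw_def)
        moreover have "f (L[p := L ! Suc p, Suc p := L ! p]) = - f L"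
          using cochain_swap[OF f, of L p] len p by (simp add: L_def)
        ultimately show ?thesis
          by (simp add: t_def L_def cs lin_neg[OF lin_pow[OF linPM]] alt_sign_neg)
      qed
    qed
    have "(\<Sum>S\<in>Pow {..<n}. t S) = (\<Sum>S\<in>Pow {..<n}. t (sw ` S))"
      using sum.reindex_bij_betw[OF bij, of t] by simp
    also have "\<dots> = - (\<Sum>S\<in>Pow {..<n}. t S)" by (simp add: tsw sum_negf)
    finally have "(\<Sum>S\<in>Pow {..<n}. t S) = 0" by (rule vs_half[OF vsN])
    then show "Psi P PM n f xs = 0" using ps by simp
  qed
qed

lemma br_antisym:
  assumes bb: "bilinear_map s s s br" and aa: "\<And>a. br a a = 0"
  shows "br y x = - br x y"
proof -
  have "0 = br (x + y) (x + y)" by (simp add: aa)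
  also have "\<dots> = br x y + br y x"
  proof -
    have "br (x + y) (x + y) = br x (x + y) + br y (x + y)" by (rule lin_add[OF bil_left[OF bb]])
    also have "\<dots> = (br x x + br x y) + (br y x + br y y)"
      by (simp add: lin_add[OF bil_right[OF bb]])
    finally show ?thesis by (simp add: aa)
  qed
  finally show ?thesis by (metis add.commute neg_eq_iff_add_eq_0)
qed

lemma delta_NjO_cochain:
  fixes s :: "'k::field \<Rightarrow> 'h::ab_group_add \<Rightarrow> 'h" and sN :: "'k \<Rightarrow> 'n::ab_group_add \<Rightarrow> 'n"
    and br :: "'h \<Rightarrow> 'h \<Rightarrow> 'h" and act :: "'h \<Rightarrow> 'n \<Rightarrow> 'n" and f :: "'h list \<Rightarrow> 'n"
  assumes vs: "vector_space s" and vsN: "vector_space sN"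
    and bb: "bilinear_map s s s br" and ba: "bilinear_map s sN sN act"
    and aa: "\<And>a. br a a = 0"
    and linP: "Vector_Spaces.linear s s P" and linPM: "Vector_Spaces.linear sN sN PM"
    and f: "f \<in> cochains s sN n"
  shows "delta_NjO br act P PM n f \<in> cochains s sN (Suc n)"
proof -
  have e: "delta_NjO br act P PM n f =
     (\<lambda>xs. - PM (delta_Lie br act n f xs) + delta_Lie (br_P br P) (\<lambda>a. act (P a)) n f xs)"
    by (rule ext) (simp add: delta_NjO_def delta_Lie_def lin_zero[OF linPM])
  have bbP: "bilinear_map s s s (br_P br P)"
    unfolding bilinear_map_def br_P_def
    by (intro allI conjI lin_difff lin_addf lin_comp[OF linP bil_left[OF bb]] bil_left[OF bb]
        lin_comp[OF bil_left[OF bb] linP] lin_comp[OF linP bil_right[OF bb]] bil_right[OF bb]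
        lin_comp[OF bil_right[OF bb] linP])
  have baP: "bilinear_map s sN sN (\<lambda>a. act (P a))"
    unfolding bilinear_map_def
    by (intro allI conjI lin_comp[OF linP bil_left[OF ba]] bil_right[OF ba])
  have aaP: "br_P br P a a = 0" for a
    using br_antisym[OF bb aa, of a "P a"] by (simp add: br_P_def aa lin_zero[OF linP])
  show ?thesis unfolding e
    by (intro cochain_add cochain_neg cochain_comp[OF _ linPM] delta_Lie_cochain[OF vs vsN bb ba aa f]
        delta_Lie_cochain[OF vs vsN bbP baP aaP f])
qed

lemma sum_pair0: "(\<Sum>i\<in>I. ((0::'a::comm_monoid_add), g i)) = (0, sum g I)"
  by (simp add: prod_eq_iff fst_sum snd_sum)

lemma alt_sign_pair: "alt_sign i ((0::'a::ab_group_add), v) = (0, alt_sign i v)"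
  by (simp add: alt_sign_def)

lemma delta_iota:
  fixes B A :: "('g::ab_group_add \<times> 'm::ab_group_add) \<Rightarrow> ('g \<times> 'm) \<Rightarrow> ('g \<times> 'm)"
    and b :: "'g \<Rightarrow> 'g \<Rightarrow> 'g" and a :: "'g \<Rightarrow> 'm \<Rightarrow> 'm" and f :: "'g list \<Rightarrow> 'm"
  assumes hB: "\<And>p q. fst (B p q) = b (fst p) (fst q)"
    and hA: "\<And>p v. A p (0, v) = (0, a (fst p) v)"
  shows "delta_Lie B A n (iota_map f) xs = (0, delta_Lie b a n f (map fst xs))"
proof (cases "length xs = Suc n")
  case False then show ?thesis by (simp add: delta_Lie_def zero_prod_def)
next
  case len: True
  have s1: "(\<Sum>i<Suc n. alt_sign i (A (xs ! i) (iota_map f (del_nth i xs)))) =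
     (\<Sum>i<Suc n. (0, alt_sign i (a (map fst xs ! i) (f (del_nth i (map fst xs))))))"
    by (rule sum.cong) (simp_all add: iota_map_def hA map_del_nth alt_sign_pair len)
  have s2: "(\<Sum>i<j. alt_sign (i + j) (iota_map f (B (xs ! i) (xs ! j) # del_nth i (del_nth j xs)))) =
     (\<Sum>i<j. (0, alt_sign (i + j) (f (b (map fst xs ! i) (map fst xs ! j) # del_nth i (del_nth j (map fst xs)))))) "
    if "j < Suc n" for j
    by (rule sum.cong) (use that in \<open>simp_all add: iota_map_def hB map_del_nth alt_sign_pair len\<close>)
  have s2': "(\<Sum>j<Suc n. \<Sum>i<j. alt_sign (i + j) (iota_map f (B (xs ! i) (xs ! j) # del_nth i (del_nth j xs)))) =
     (\<Sum>j<Suc n. (0, \<Sum>i<j. alt_sign (i + j) (f (b (map fst xs ! i) (map fst xs ! j) # del_nth i (del_nth j (map fst xs))))))"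
    by (rule sum.cong) (simp_all only: s2 sum_pair0 lessThan_iff)
  show ?thesis unfolding delta_Lie_def
    by (simp only: len length_map if_True simp_thms s1 s2' sum_pair0 add_Pair add_0)
qed

lemma pow_sdP: "P 0 = 0 \<Longrightarrow> (sd_P P PM ^^ m) (0, v) = (0, (PM ^^ m) v)"
  by (induction m) (simp_all add: sd_P_def)

lemma Psi_iota:
  assumes P0: "P 0 = 0"
  shows "Psi (sd_P P PM) (sd_P P PM) n (iota_map f) xs = (0, Psi P PM n f (map fst xs))"
proof (cases "length xs = n")
  case False then show ?thesis by (simp add: Psi_def zero_prod_def)
next
  case True
  have "(\<Sum>S\<in>Pow {..<n}. alt_sign (n - card S) ((sd_P P PM ^^ (n - card S)) (iota_map f (apply_at (sd_P P PM) S xs))))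
     = (\<Sum>S\<in>Pow {..<n}. (0, alt_sign (n - card S) ((PM ^^ (n - card S)) (f (apply_at P S (map fst xs))))))"
    by (rule sum.cong) (simp_all add: iota_map_def map_apply_at pow_sdP[of P, OF P0] alt_sign_pair)
  then show ?thesis using True by (simp add: Psi_def sum_pair0)
qed

lemma delta_NjO_iota:
  fixes br :: "'g::ab_group_add \<Rightarrow> 'g \<Rightarrow> 'g" and act :: "'g \<Rightarrow> 'm::ab_group_add \<Rightarrow> 'm"
  assumes P0: "P 0 = 0" and br0: "\<And>x. br x 0 = 0" and act0: "\<And>v. act 0 v = 0"
  shows "delta_NjO (sd_br br act) (sd_br br act) (sd_P P PM) (sd_P P PM) m (iota_map g) xs
     = (0, delta_NjO br act P PM m g (map fst xs))"
proof -
  have d1: "delta_Lie (sd_br br act) (sd_br br act) m (iota_map g) xs = (0, delta_Lie br act m g (map fst xs))"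
    by (rule delta_iota) (simp_all add: sd_br_def br0 act0)
  have d2: "delta_Lie (br_P (sd_br br act) (sd_P P PM)) (\<lambda>a. sd_br br act (sd_P P PM a)) m (iota_map g) xs
     = (0, delta_Lie (br_P br P) (\<lambda>a. act (P a)) m g (map fst xs))"
    by (rule delta_iota) (simp_all add: sd_br_def sd_P_def br_P_def br0 act0)
  show ?thesis
    by (simp only: delta_NjO_def d1 d2) (simp add: sd_P_def P0 zero_prod_def)
qed

theorem proposition6p5:
  fixes s :: "'k::field_char_0 \<Rightarrow> 'g::ab_group_add \<Rightarrow> 'g"
    and br :: "'g \<Rightarrow> 'g \<Rightarrow> 'g" and P :: "'g \<Rightarrow> 'g"
    and sM :: "'k \<Rightarrow> 'm::ab_group_add \<Rightarrow> 'm"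
    and act :: "'g \<Rightarrow> 'm \<Rightarrow> 'm" and PM :: "'m \<Rightarrow> 'm"
    and n :: nat
  assumes "nijenhuis_lie_algebra s br P"
    and "nijenhuis_rep s br P sM act PM"
    and "x \<in> NjL_cochains s sM n"
  shows "\<exists>y \<in> NjL_cochains s sM (Suc n).
           delta_NjL (sd_br br act) (sd_br br act) (sd_P P PM) (sd_P P PM) n (iota x) = iota y"
proof -
  have linP: "Vector_Spaces.linear s s P" using assms(1) by (simp add: nijenhuis_lie_algebra_def)
  have linPM: "Vector_Spaces.linear sM sM PM" using assms(2) by (simp add: nijenhuis_rep_def)
  have lr: "lie_rep s br sM act" using assms(2) by (simp add: nijenhuis_rep_def)
  have vs: "vector_space s" and bb: "bilinear_map s s s br" and aa: "\<And>a. br a a = 0"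
    using lr by (simp_all add: lie_rep_def lie_algebra_def)
  have vsM: "vector_space sM" and ba: "bilinear_map s sM sM act"
    using lr by (simp_all add: lie_rep_def)
  have P0: "P 0 = 0" by (rule lin_zero[OF linP])
  have br0: "br a 0 = 0" for a by (rule lin_zero[OF bil_right[OF bb]])
  have act0: "act 0 v = 0" for v by (rule lin_zero[OF bil_left[OF ba]])
  obtain f g where x: "x = (f, g)" by fastforce
  have f: "f \<in> cochains s sM n" and g: "n \<noteq> 0 \<Longrightarrow> g \<in> cochains s sM (n - 1)"
    using assms(3) by (auto simp: x NjL_cochains_def)
  define y where "y = delta_NjL br act P PM n (f, g)"
  have y: "y = (delta_Lie br act n f,
     \<lambda>xs. - Psi P PM n f xs - (if n = 0 then 0 else delta_NjO br act P PM (n - 1) g xs))"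
    unfolding y_def delta_NjL_def fst_conv snd_conv by (rule refl)
  have yc: "y \<in> NjL_cochains s sM (Suc n)"
  proof -
    have c1: "delta_Lie br act n f \<in> cochains s sM (Suc n)"
      by (rule delta_Lie_cochain[OF vs vsM bb ba aa f])
    have c2: "(\<lambda>xs. - Psi P PM n f xs - (if n = 0 then 0 else delta_NjO br act P PM (n - 1) g xs))
       \<in> cochains s sM n"
    proof (cases "n = 0")
      case True
      then show ?thesis using cochain_neg[OF Psi_cochain[OF vs vsM linP linPM f]] by simp
    next
      case False
      have "delta_NjO br act P PM (n - 1) g \<in> cochains s sM (Suc (n - 1))"
        by (rule delta_NjO_cochain[OF vs vsM bb ba aa linP linPM g[OF False]])
      then have "delta_NjO br act P PM (n - 1) g \<in> cochains s sM n" using False by simp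
      then show ?thesis using False cochain_diff[OF cochain_neg[OF Psi_cochain[OF vs vsM linP linPM f]]]
        by simp
    qed
    show ?thesis using c1 c2 by (simp add: y NjL_cochains_def)
  qed
  have eq: "delta_NjL (sd_br br act) (sd_br br act) (sd_P P PM) (sd_P P PM) n (iota x) = iota y"
  proof -
    have e1: "delta_Lie (sd_br br act) (sd_br br act) n (iota_map f) = iota_map (delta_Lie br act n f)"
      by (rule ext) (simp add: iota_map_def delta_iota sd_br_def br0 act0)
    have e2: "(\<lambda>xs. - Psi (sd_P P PM) (sd_P P PM) n (iota_map f) xs -
         (if n = 0 then 0 else delta_NjO (sd_br br act) (sd_br br act) (sd_P P PM) (sd_P P PM) (n - 1) (iota_map g) xs))
       = iota_map (\<lambda>xs. - Psi P PM n f xs - (if n = 0 then 0 else delta_NjO br act P PM (n - 1) g xs))"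
      by (rule ext) (simp add: iota_map_def Psi_iota[of P, OF P0] delta_NjO_iota[of P br act, OF P0 br0 act0] zero_prod_def)
    show ?thesis unfolding x y iota_def delta_NjL_def fst_conv snd_conv e1 e2 by (rule refl)
  qed
  show ?thesis using yc eq by blast
qed

end
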